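(* The subspace topology induced on $D(G,K)\subseteq\mathcal R(G,K)$ by the nice topology of $\mathcal R(G,K)$ coincides with the canonical Fréchet topology of $D(G,K)$ (defined by the norms $\|\cdot\|_\rho$, $p^{-1}<\rho<1$).
   Context: $p$ is an odd prime and $K$ is a complete discretely valued field with $\mathbb Q_p\subseteq K\subseteq\mathbb C_p$, $o_K$ its ring of integers. $G$ is a uniform pro-$p$ group of dimension $d$ with an ordered minimal system of topological generators $h_1,\dots,h_d$; $b_i=h_i-1$. For $\alpha\in\mathbb Z^d$ write $\mathbf b^\alpha=b_1^{\alpha_1}\cdots b_d^{\alpha_d}$ and $\deg\alpha=\alpha_1+\dots+\alpha_d$. $D(G,K)$ is the ring of series $\sum_{\alpha\in\mathbb N_0^d}d_\alpha\mathbf b^\alpha$ with $\{|d_\alpha|\rho^{\deg\alpha}\}$ bounded for all $0<\rho<1$; for $\rho\in p^{\mathbb Q}\cap(p^{-1},1)$, $\|\cdot\|_\rho=\sup_\alpha|d_\alpha|\rho^{\deg\alpha}$ and $D_\rho(G,K)$ is the completion. For $r_0\le r$ in $p^{\mathbb Q}\cap(p^{-1},1)$, $D_{[r_0,r]}(G,K)$ is the $K$-Banach algebra obtained from $A=D_r(G,K)$ by generalized microlocalization at the multiplicative monoid $S$ generated by $b_1,\dots,b_d$ with respect to the two norms $\|\cdot\|_{r_0},\|\cdot\|_r$: with $S_i=\{a:|at-s|_i<|s|_i\text{ for some }s,t\in S\}$, $\Delta_i((s,a),(t,b))=|s|_i^{-1}|t|_i^{-1}|at-sb|_i$, $d_i(x,y)=\inf_{\xi\in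 S_i\times A}\max(\Delta_i(x,\xi),\Delta_i(y,\xi))$, $d=\max(d_1,d_2)$, it is the Hausdorff completion of $(S\times A,d)$ with its natural Banach algebra structure in which $(s,a)$ becomes $s^{-1}a$ and $S$ becomes invertible; $D(G,K)\subseteq D_r(G,K)\subseteq D_{[r_0,r]}(G,K)$. Its elements are exactly the convergent Laurent series $\sum_{\alpha\in\mathbb Z^d}d_\alpha\mathbf b^\alpha$ with $|d_\alpha|r_0^{\deg\alpha},|d_\alpha|r^{\deg\alpha}\to0$ as $\sum_i|\alpha_i|\to\infty$. $D_{[r,1)}(G,K)=\varprojlim_{r''\to1}D_{[r,r'']}(G,K)$ and $\mathcal R(G,K)=\varinjlim_{r\to1}D_{[r,1)}(G,K)$. Nice topology: for $x_0=\sum_\alpha c_{0,\alpha}\mathbf b^\alpha\in\mathcal R(G,K)$ let $L_{x_0}=\{\sum_\alpha d_\alpha\mathbf b^\alpha\in\mathcal R(G,K):|c_{0,-\alpha}||d_\alpha|\le1\ \forall\alpha\in\mathbb Z^d\}$; the nice topology is the locally convex topology on $\mathcal R(G,K)$ in which an $o_K$-lattice is open iff it contains some $L_{x_0}$. *)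

theory Defs
  imports Complex_Main "HOL-Computational_Algebra.Primes"
begin

text \<open>Coefficient field K: a field with an absolute value absK such that K is a
complete discretely valued extension of Q_p inside C_p (char 0, ultrametric,
|p| = 1/p, cyclic value group, complete, residue field algebraic over F_p).\<close>

definition disc_padic_field :: "nat \<Rightarrow> ('k::field \<Rightarrow> real) \<Rightarrow> bool" where
  "disc_padic_field p absK \<longleftrightarrow>
     prime p \<and>
     (\<forall>n::nat. n > 0 \<longrightarrow> (of_nat n :: 'k) \<noteq> 0) \<and>
     (\<forall>x. absK x \<ge> 0) \<and> (\<forall>x. absK x = 0 \<longleftrightarrow> x = 0) \<and>
     (\<forall>x y. absK (x * y) = absK x * absK y) \<and>
     (\<forall>x y. absK (x + y) \<le> max (absK x) (absK y)) \<and>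
     absK (of_nat p) = 1 / real p \<and>
     (\<exists>e::nat. e > 0 \<and> absK ` (UNIV - {0}) = {real p powr (real_of_int k / real e) | k. True}) \<and>
     (\<forall>X::nat \<Rightarrow> 'k. (\<forall>\<epsilon>>0. \<exists>N. \<forall>m\<ge>N. \<forall>n\<ge>N. absK (X m - X n) < \<epsilon>) \<longrightarrow>
        (\<exists>L. \<forall>\<epsilon>>0. \<exists>N. \<forall>n\<ge>N. absK (X n - L) < \<epsilon>)) \<and>
     (\<forall>x. absK x \<le> 1 \<longrightarrow> (\<exists>n\<ge>1. absK (x ^ (p ^ n) - x) < 1))"

text \<open>Multi-indices alpha in Z^d, d = CARD('n); coefficient families (Laurent series).\<close>

definition deg :: "('n::finite \<Rightarrow> int) \<Rightarrow> int" where
  "deg \<alpha> = (\<Sum>i\<in>UNIV. \<alpha> i)"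

definition absdeg :: "('n::finite \<Rightarrow> int) \<Rightarrow> int" where
  "absdeg \<alpha> = (\<Sum>i\<in>UNIV. \<bar>\<alpha> i\<bar>)"

definition rpows :: "nat \<Rightarrow> real set" where
  "rpows p = {r. \<exists>q\<in>\<rat>. r = real p powr q}"

text \<open>Elements of D_[r0,r](G,K) as Laurent series.\<close>
definition annulus_series :: "('k::field \<Rightarrow> real) \<Rightarrow> real \<Rightarrow> real \<Rightarrow> (('n::finite \<Rightarrow> int) \<Rightarrow> 'k) set" where
  "annulus_series absK r0 r = {c.
     (\<forall>\<epsilon>>0. \<exists>N. \<forall>\<alpha>. absdeg \<alpha> \<ge> N \<longrightarrow> absK (c \<alpha>) * r0 powr real_of_int (deg \<alpha>) < \<epsilon>) \<and>
     (\<forall>\<epsilon>>0. \<exists>N. \<forall>\<alpha>. absdeg \<alpha> \<ge> N \<longrightarrow> absK (c \<alpha>) * r powr real_of_int (deg \<alpha>) < \<epsilon>)}"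

text \<open>D_[r,1)(G,K) = inverse limit (intersection) over r'' -> 1.\<close>
definition halfopen_series :: "nat \<Rightarrow> ('k::field \<Rightarrow> real) \<Rightarrow> real \<Rightarrow> (('n::finite \<Rightarrow> int) \<Rightarrow> 'k) set" where
  "halfopen_series p absK r = {c. \<forall>r''\<in>rpows p. r \<le> r'' \<and> r'' < 1 \<longrightarrow> c \<in> annulus_series absK r r''}"

text \<open>The Robba ring R(G,K) = direct limit (union) over r -> 1.\<close>
definition robba :: "nat \<Rightarrow> ('k::field \<Rightarrow> real) \<Rightarrow> (('n::finite \<Rightarrow> int) \<Rightarrow> 'k) set" where
  "robba p absK = (\<Union>r\<in>{r\<in>rpows p. 1 / real p < r \<and> r < 1}. halfopen_series p absK r)"

definition dist_alg :: "('k::field \<Rightarrow> real) \<Rightarrow> (('n::finite \<Rightarrow> int) \<Rightarrow> 'k) set" where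
  "dist_alg absK = {c. (\<forall>\<alpha>. (\<exists>i. \<alpha> i < 0) \<longrightarrow> c \<alpha> = 0) \<and>
     (\<forall>\<rho>. 0 < \<rho> \<and> \<rho> < 1 \<longrightarrow> bdd_above (range (\<lambda>\<alpha>. absK (c \<alpha>) * \<rho> powr real_of_int (deg \<alpha>))))}"

definition rho_norm :: "('k::field \<Rightarrow> real) \<Rightarrow> real \<Rightarrow> (('n::finite \<Rightarrow> int) \<Rightarrow> 'k) \<Rightarrow> real" where
  "rho_norm absK \<rho> c = (SUP \<alpha>. absK (c \<alpha>) * \<rho> powr real_of_int (deg \<alpha>))"

definition frechet_open :: "nat \<Rightarrow> ('k::field \<Rightarrow> real) \<Rightarrow> (('n::finite \<Rightarrow> int) \<Rightarrow> 'k) set set" where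
  "frechet_open p absK = {U. U \<subseteq> dist_alg absK \<and>
     (\<forall>x\<in>U. \<exists>F. finite F \<and> F \<subseteq> {1 / real p<..<1} \<and> (\<exists>\<epsilon>>0.
        {y\<in>dist_alg absK. \<forall>\<rho>\<in>F. rho_norm absK \<rho> (\<lambda>\<alpha>. y \<alpha> - x \<alpha>) < \<epsilon>} \<subseteq> U))}"

definition L_set :: "nat \<Rightarrow> ('k::field \<Rightarrow> real) \<Rightarrow> (('n::finite \<Rightarrow> int) \<Rightarrow> 'k) \<Rightarrow> (('n \<Rightarrow> int) \<Rightarrow> 'k) set" where
  "L_set p absK x0 = {d\<in>robba p absK. \<forall>\<alpha>. absK (x0 (\<lambda>i. - \<alpha> i)) * absK (d \<alpha>) \<le> 1}"

text \<open>o_K-lattice in R(G,K): o_K-submodule that is absorbing.\<close>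
definition oK_lattice :: "nat \<Rightarrow> ('k::field \<Rightarrow> real) \<Rightarrow> (('n::finite \<Rightarrow> int) \<Rightarrow> 'k) set \<Rightarrow> bool" where
  "oK_lattice p absK M \<longleftrightarrow> M \<subseteq> robba p absK \<and> (\<lambda>\<alpha>. 0) \<in> M \<and>
     (\<forall>x\<in>M. \<forall>y\<in>M. (\<lambda>\<alpha>. x \<alpha> + y \<alpha>) \<in> M) \<and>
     (\<forall>a x. absK a \<le> 1 \<longrightarrow> x \<in> M \<longrightarrow> (\<lambda>\<alpha>. a * x \<alpha>) \<in> M) \<and>
     (\<forall>v\<in>robba p absK. \<exists>a. a \<noteq> 0 \<and> (\<lambda>\<alpha>. a * v \<alpha>) \<in> M)"

text \<open>Open sets of the nice (locally convex) topology on R(G,K): open lattices are the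
lattices containing some L_{x0}; U is open iff each point has a translate of an open lattice inside U.\<close>
definition nice_open :: "nat \<Rightarrow> ('k::field \<Rightarrow> real) \<Rightarrow> (('n::finite \<Rightarrow> int) \<Rightarrow> 'k) set set" where
  "nice_open p absK = {U. U \<subseteq> robba p absK \<and>
     (\<forall>x\<in>U. \<exists>M. oK_lattice p absK M \<and> (\<exists>x0\<in>robba p absK. L_set p absK x0 \<subseteq> M) \<and>
        (\<lambda>m. (\<lambda>\<alpha>. x \<alpha> + m \<alpha>)) ` M \<subseteq> U)}"

end

theory Submission imports Defs "HOL-Library.FuncSet" begin

lemma finite_box: "finite {\<beta>::'n::finite\<Rightarrow>int. \<forall>i. \<beta> i \<in> {-N..N}}"
proof -
  have "{\<beta>::'n\<Rightarrow>int. \<forall>i. \<beta> i \<in> {-N..N}} = PiE UNIV (\<lambda>_. {-N..N})"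
    by (auto simp: PiE_def Pi_def)
  then show ?thesis by (simp add: finite_PiE)
qed

lemma finite_absdeg: "finite {\<beta>::'n::finite\<Rightarrow>int. absdeg \<beta> < N}"
proof -
  have "{\<beta>::'n\<Rightarrow>int. absdeg \<beta> < N} \<subseteq> {\<beta>. \<forall>i. \<beta> i \<in> {-N..N}}"
  proof (clarify)
    fix \<beta> :: "'n\<Rightarrow>int" and i assume a: "absdeg \<beta> < N"
    have "\<bar>\<beta> i\<bar> \<le> absdeg \<beta>" unfolding absdeg_def
      by (rule member_le_sum) auto
    then show "\<beta> i \<in> {-N..N}" using a by auto
  qed
  then show ?thesis using finite_box finite_subset by blast
qed

lemma tail_bdd:
  fixes f :: "('n::finite\<Rightarrow>int) \<Rightarrow> real"
  assumes "\<forall>\<alpha>. absdeg \<alpha> \<ge> N \<longrightarrow> f \<alpha> < 1"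
  shows "bdd_above (range f)"
proof -
  have "range f \<subseteq> f ` {\<beta>. absdeg \<beta> < N} \<union> {..1}"
  proof
    fix y assume "y \<in> range f"
    then obtain \<alpha> where y: "y = f \<alpha>" by blast
    show "y \<in> f ` {\<beta>. absdeg \<beta> < N} \<union> {..1}"
    proof (cases "absdeg \<alpha> < N")
      case True then show ?thesis using y by blast
    next
      case False then have "f \<alpha> < 1" using assms by auto
      then show ?thesis using y by auto
    qed
  qed
  moreover have "bdd_above (f ` {\<beta>. absdeg \<beta> < N} \<union> {..1})"
    by (simp add: bdd_above_finite[OF finite_imageI[OF finite_absdeg]])
  ultimately show ?thesis by (meson bdd_above_mono)
qed

definition tl :: "('k::field \<Rightarrow> real) \<Rightarrow> (('n::finite \<Rightarrow> int) \<Rightarrow> 'k) \<Rightarrow> real \<Rightarrow> bool" where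
  "tl absK c s \<longleftrightarrow> (\<forall>\<epsilon>>0. \<exists>N. \<forall>\<alpha>. absdeg \<alpha> \<ge> N \<longrightarrow> absK (c \<alpha>) * s powr real_of_int (deg \<alpha>) < \<epsilon>)"

lemma annulus_tl: "c \<in> annulus_series absK r0 r \<longleftrightarrow> tl absK c r0 \<and> tl absK c r"
  by (simp add: annulus_series_def tl_def)

lemma deg_neg: "deg (\<lambda>i. - \<alpha> i) = - deg \<alpha>"
  by (simp add: deg_def sum_negf)
lemma absdeg_neg: "absdeg (\<lambda>i. - \<alpha> i) = absdeg \<alpha>"
  by (simp add: absdeg_def)
lemma deg_nonneg: "\<forall>i. \<alpha> i \<ge> 0 \<Longrightarrow> deg \<alpha> = absdeg \<alpha>"
  by (simp add: deg_def absdeg_def)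
lemma deg_nonpos: "\<forall>i. \<alpha> i \<le> 0 \<Longrightarrow> deg \<alpha> = - absdeg \<alpha>"
  by (simp add: deg_def absdeg_def sum_negf[symmetric])

locale padic =
  fixes p :: nat and absK :: "'k::field \<Rightarrow> real"
  assumes dpf: "disc_padic_field p absK"
begin

lemma prime: "prime p" using dpf unfolding disc_padic_field_def by blast
lemma p_gt1: "p > 1" using prime prime_gt_1_nat by blast
lemma abs_nonneg: "absK x \<ge> 0" using dpf unfolding disc_padic_field_def by blast
lemma abs_zero_iff: "absK x = 0 \<longleftrightarrow> x = 0" using dpf unfolding disc_padic_field_def by blast
lemma abs_mult: "absK (x*y) = absK x * absK y" using dpf unfolding disc_padic_field_def by blast
lemma abs_ultra: "absK (x+y) \<le> max (absK x) (absK y)" using dpf unfolding disc_padic_field_def by blast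
lemma abs_p: "absK (of_nat p) = 1 / real p" using dpf unfolding disc_padic_field_def by blast
lemma char0: "n>0 \<Longrightarrow> (of_nat n::'k) \<noteq> 0" using dpf unfolding disc_padic_field_def by blast
lemma abs_zero[simp]: "absK 0 = 0" using abs_zero_iff by simp
lemma abs_one[simp]: "absK 1 = 1"
proof -
  have "absK 1 = absK 1 * absK 1" using abs_mult[of 1 1] by simp
  moreover have "absK 1 \<noteq> 0" using abs_zero_iff by simp
  ultimately show ?thesis by simp
qed
lemma abs_uminus[simp]: "absK (-x) = absK x"
proof -
  have "absK (-1) * absK (-1) = 1" using abs_mult[of "-1" "-1"] by simp
  then have "absK (-1) = 1" using abs_nonneg[of "-1"]
    by (metis abs_nonneg power2_eq_square power2_eq_1_iff neg_equal_zero zero_le_one le_minus_one_simps(3) linorder_not_le)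
  then show ?thesis using abs_mult[of "-1" x] by simp
qed
lemma abs_diff: "absK (x - y) \<le> max (absK x) (absK y)"
  using abs_ultra[of x "-y"] by simp
lemma abs_power: "absK (x^n) = absK x ^ n"
  by (induction n) (auto simp: abs_mult)
lemma abs_inverse: "absK (inverse x) = inverse (absK x)"
proof (cases "x = 0")
  case False
  then have "absK (inverse x) * absK x = 1" using abs_mult[of "inverse x" x] by simp
  then show ?thesis using False abs_zero_iff by (simp add: field_simps)
qed simp
lemma P_nz: "(of_nat p :: 'k) \<noteq> 0" using char0 p_gt1 by simp
lemma abs_Ppow: "absK ((of_nat p :: 'k)^n) = inverse (real p ^ n)"
  using abs_power abs_p by (simp add: power_one_over divide_inverse power_inverse)


lemma rpows_pos: "r \<in> rpows p \<Longrightarrow> r > 0"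
  using p_gt1 by (auto simp: rpows_def)

lemma D_tail:
  fixes c :: "('n::finite \<Rightarrow> int) \<Rightarrow> 'k"
  assumes c: "c \<in> dist_alg absK" and s: "0<s" "s<1"
  shows "tl absK c s"
proof -
  define \<sigma> where "\<sigma> = (s+1)/2"
  have \<sigma>: "0<\<sigma>" "\<sigma><1" "s<\<sigma>" using s by (auto simp: \<sigma>_def)
  from c \<sigma> have "bdd_above (range (\<lambda>\<alpha>. absK (c \<alpha>) * \<sigma> powr real_of_int (deg \<alpha>)))"
    unfolding dist_alg_def by auto
  then obtain B where B: "\<And>\<alpha>. absK (c \<alpha>) * \<sigma> powr real_of_int (deg \<alpha>) \<le> B"
    unfolding bdd_above_def by auto
  define q where "q = s/\<sigma>"
  have q: "0<q" "q<1" using \<sigma> s by (auto simp: q_def)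
  have sq: "s = \<sigma>*q" using \<sigma> by (simp add: q_def)
  define B' where "B' = max B 1"
  have B'pos: "B' > 0" by (simp add: B'_def)
  show ?thesis unfolding tl_def
  proof (intro allI impI)
    fix \<epsilon>::real assume e: "\<epsilon>>0"
    obtain N::nat where N: "q^N < \<epsilon>/B'" using real_arch_pow_inv[of "\<epsilon>/B'" q] e q B'pos by auto
    show "\<exists>N. \<forall>\<alpha>. absdeg \<alpha> \<ge> N \<longrightarrow> absK (c \<alpha>) * s powr real_of_int (deg \<alpha>) < \<epsilon>"
    proof (intro exI[of _ "int N"] allI impI)
      fix \<alpha> :: "'n\<Rightarrow>int" assume a: "absdeg \<alpha> \<ge> int N"
      show "absK (c \<alpha>) * s powr real_of_int (deg \<alpha>) < \<epsilon>"
      proof (cases "\<exists>i. \<alpha> i < 0")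
        case True then have "c \<alpha> = 0" using c by (auto simp: dist_alg_def)
        then show ?thesis using e by simp
      next
        case False
        then have "deg \<alpha> = absdeg \<alpha>" using deg_nonneg by (metis not_less)
        then have dN: "real_of_int (deg \<alpha>) \<ge> real N" using a by simp
        have "q powr real_of_int (deg \<alpha>) \<le> q powr real N" by (rule powr_mono') (use dN q in auto)
        also have "\<dots> = q^N" using q by (simp add: powr_realpow)
        finally have qle: "q powr real_of_int (deg \<alpha>) \<le> q^N" .
        have "absK (c \<alpha>) * s powr real_of_int (deg \<alpha>) = (absK (c \<alpha>) * \<sigma> powr real_of_int (deg \<alpha>)) * q powr real_of_int (deg \<alpha>)"
          by (simp add: sq powr_mult)
        also have "\<dots> \<le> B' * q^N"
        proof (rule mult_mono)
          show "absK (c \<alpha>) * \<sigma> powr real_of_int (deg \<alpha>) \<le> B'" using B[of \<alpha>] by (simp add: B'_def)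
        qed (use qle B'pos in auto)
        also have "\<dots> < \<epsilon>" using N B'pos by (simp add: pos_less_divide_eq mult.commute)
        finally show ?thesis .
      qed
    qed
  qed
qed

lemma tl_add:
  fixes a b :: "('n::finite \<Rightarrow> int) \<Rightarrow> 'k"
  assumes "tl absK a s" "tl absK b s"
  shows "tl absK (\<lambda>\<alpha>. a \<alpha> + b \<alpha>) s"
  unfolding tl_def
proof (intro allI impI)
  fix \<epsilon>::real assume e: "\<epsilon>>0"
  obtain N1 where N1: "\<forall>\<alpha>. absdeg \<alpha> \<ge> N1 \<longrightarrow> absK (a \<alpha>) * s powr real_of_int (deg \<alpha>) < \<epsilon>"
    using assms(1) e unfolding tl_def by blast
  obtain N2 where N2: "\<forall>\<alpha>. absdeg \<alpha> \<ge> N2 \<longrightarrow> absK (b \<alpha>) * s powr real_of_int (deg \<alpha>) < \<epsilon>"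
    using assms(2) e unfolding tl_def by blast
  show "\<exists>N. \<forall>\<alpha>. absdeg \<alpha> \<ge> N \<longrightarrow> absK (a \<alpha> + b \<alpha>) * s powr real_of_int (deg \<alpha>) < \<epsilon>"
  proof (intro exI[of _ "max N1 N2"] allI impI)
    fix \<alpha> :: "'n\<Rightarrow>int" assume "absdeg \<alpha> \<ge> max N1 N2"
    then have h1: "absK (a \<alpha>) * s powr real_of_int (deg \<alpha>) < \<epsilon>" "absK (b \<alpha>) * s powr real_of_int (deg \<alpha>) < \<epsilon>"
      using N1 N2 by auto
    have "absK (a \<alpha> + b \<alpha>) * s powr real_of_int (deg \<alpha>) \<le> max (absK (a \<alpha>)) (absK (b \<alpha>)) * s powr real_of_int (deg \<alpha>)"
      by (rule mult_right_mono[OF abs_ultra]) simp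
    also have "\<dots> < \<epsilon>" using h1 by (cases "absK (a \<alpha>) \<le> absK (b \<alpha>)") (auto simp: max_def)
    finally show "absK (a \<alpha> + b \<alpha>) * s powr real_of_int (deg \<alpha>) < \<epsilon>" .
  qed
qed

lemma tl_smul:
  fixes c :: "('n::finite \<Rightarrow> int) \<Rightarrow> 'k"
  assumes "tl absK c s" "absK a \<le> 1"
  shows "tl absK (\<lambda>\<alpha>. a * c \<alpha>) s"
  unfolding tl_def
proof (intro allI impI)
  fix \<epsilon>::real assume e: "\<epsilon>>0"
  obtain N where N: "\<forall>\<alpha>. absdeg \<alpha> \<ge> N \<longrightarrow> absK (c \<alpha>) * s powr real_of_int (deg \<alpha>) < \<epsilon>"
    using assms(1) e unfolding tl_def by blast
  show "\<exists>N. \<forall>\<alpha>. absdeg \<alpha> \<ge> N \<longrightarrow> absK (a * c \<alpha>) * s powr real_of_int (deg \<alpha>) < \<epsilon>"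
  proof (intro exI[of _ N] allI impI)
    fix \<alpha> :: "'n\<Rightarrow>int" assume "absdeg \<alpha> \<ge> N"
    then have h: "absK (c \<alpha>) * s powr real_of_int (deg \<alpha>) < \<epsilon>" using N by auto
    have "absK (a * c \<alpha>) * s powr real_of_int (deg \<alpha>) = absK a * (absK (c \<alpha>) * s powr real_of_int (deg \<alpha>))"
      by (simp add: abs_mult)
    also have "\<dots> \<le> 1 * (absK (c \<alpha>) * s powr real_of_int (deg \<alpha>))"
      by (rule mult_right_mono) (use assms(2) abs_nonneg in auto)
    finally show "absK (a * c \<alpha>) * s powr real_of_int (deg \<alpha>) < \<epsilon>" using h by simp
  qed
qed

lemma halfopen_mono:
  assumes "c \<in> halfopen_series p absK r1" "r1 \<le> r" "r \<in> rpows p" "r < 1"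
  shows "c \<in> halfopen_series p absK r"
  unfolding halfopen_series_def annulus_tl
proof (clarify)
  fix r'' assume h: "r'' \<in> rpows p" "r \<le> r''" "r'' < 1"
  then have "c \<in> annulus_series absK r1 r''" "c \<in> annulus_series absK r1 r" using assms unfolding halfopen_series_def by auto
  then show "tl absK c r \<and> tl absK c r''" by (simp add: annulus_tl)
qed

lemma halfopen_add:
  assumes "a \<in> halfopen_series p absK r" "b \<in> halfopen_series p absK r"
  shows "(\<lambda>\<alpha>. a \<alpha> + b \<alpha>) \<in> halfopen_series p absK r"
  using assms unfolding halfopen_series_def annulus_tl by (auto intro: tl_add)

lemma halfopen_smul:
  assumes "c \<in> halfopen_series p absK r" "absK a \<le> 1"
  shows "(\<lambda>\<alpha>. a * c \<alpha>) \<in> halfopen_series p absK r"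
  using assms unfolding halfopen_series_def annulus_tl by (auto intro: tl_smul)

lemma R_add:
  assumes "a \<in> robba p absK" "b \<in> robba p absK"
  shows "(\<lambda>\<alpha>. a \<alpha> + b \<alpha>) \<in> robba p absK"
proof -
  obtain r1 where r1: "r1 \<in> rpows p" "1 / real p < r1" "r1 < 1" "a \<in> halfopen_series p absK r1"
    using assms(1) unfolding robba_def by auto
  obtain r2 where r2: "r2 \<in> rpows p" "1 / real p < r2" "r2 < 1" "b \<in> halfopen_series p absK r2"
    using assms(2) unfolding robba_def by auto
  define r where "r = max r1 r2"
  have r: "r \<in> rpows p" "1 / real p < r" "r < 1" using r1 r2 by (auto simp: r_def max_def)
  have "a \<in> halfopen_series p absK r" "b \<in> halfopen_series p absK r"
    using halfopen_mono[OF r1(4) _ r(1) r(3)] halfopen_mono[OF r2(4) _ r(1) r(3)] by (auto simp: r_def)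
  then have "(\<lambda>\<alpha>. a \<alpha> + b \<alpha>) \<in> halfopen_series p absK r" by (rule halfopen_add)
  then show ?thesis using r unfolding robba_def by auto
qed

lemma R_smul:
  assumes "c \<in> robba p absK" "absK a \<le> 1"
  shows "(\<lambda>\<alpha>. a * c \<alpha>) \<in> robba p absK"
  using assms halfopen_smul unfolding robba_def by blast

definition r_half :: real where "r_half = real p powr (-1/2)"

lemma r_half: "r_half \<in> rpows p" "1 / real p < r_half" "r_half < 1"
proof -
  show "r_half \<in> rpows p" unfolding rpows_def r_half_def
    by (rule CollectI, rule bexI[of _ "-1/2"]) auto
  have "1 / real p = real p powr (-1)" using p_gt1 by (simp add: powr_minus divide_inverse)
  also have "\<dots> < r_half" using p_gt1 unfolding r_half_def by (intro powr_less_mono) auto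
  finally show "1 / real p < r_half" .
  have "r_half < real p powr 0" using p_gt1 unfolding r_half_def
    by (intro powr_less_mono) auto
  then show "r_half < 1" using p_gt1 by simp
qed

lemma D_sub_R: "dist_alg absK \<subseteq> robba p absK"
proof
  fix c :: "('n::finite\<Rightarrow>int) \<Rightarrow> 'k" assume c: "c \<in> dist_alg absK"
  have "c \<in> halfopen_series p absK r_half"
    unfolding halfopen_series_def annulus_tl
  proof (clarify)
    fix r'' assume h: "r'' \<in> rpows p" "r_half \<le> r''" "r'' < 1"
    show "tl absK c r_half \<and> tl absK c r''"
      using D_tail[OF c] rpows_pos h r_half by auto
  qed
  then show "c \<in> robba p absK" using r_half unfolding robba_def by auto
qed

lemma D_diff:
  fixes x y :: "('n::finite \<Rightarrow> int) \<Rightarrow> 'k"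
  assumes "x \<in> dist_alg absK" "y \<in> dist_alg absK"
  shows "(\<lambda>\<alpha>. y \<alpha> - x \<alpha>) \<in> dist_alg absK"
  unfolding dist_alg_def
proof (intro CollectI conjI allI impI)
  fix \<alpha> :: "'n\<Rightarrow>int" assume "\<exists>i. \<alpha> i < 0" then show "y \<alpha> - x \<alpha> = 0" using assms by (auto simp: dist_alg_def)
next
  fix \<rho>::real assume r: "0 < \<rho> \<and> \<rho> < 1"
  obtain B1 where B1: "\<And>\<alpha>. absK (x \<alpha>) * \<rho> powr real_of_int (deg \<alpha>) \<le> B1"
    using assms(1) r unfolding dist_alg_def bdd_above_def by fastforce
  obtain B2 where B2: "\<And>\<alpha>. absK (y \<alpha>) * \<rho> powr real_of_int (deg \<alpha>) \<le> B2"
    using assms(2) r unfolding dist_alg_def bdd_above_def by fastforce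
  show "bdd_above (range (\<lambda>\<alpha>. absK (y \<alpha> - x \<alpha>) * \<rho> powr real_of_int (deg \<alpha>)))"
    unfolding bdd_above_def
  proof (intro exI[of _ "max B1 B2"] ballI)
    fix t assume "t \<in> range (\<lambda>\<alpha>. absK (y \<alpha> - x \<alpha>) * \<rho> powr real_of_int (deg \<alpha>))"
    then obtain \<alpha> where t: "t = absK (y \<alpha> - x \<alpha>) * \<rho> powr real_of_int (deg \<alpha>)" by blast
    have "t \<le> max (absK (y \<alpha>)) (absK (x \<alpha>)) * \<rho> powr real_of_int (deg \<alpha>)"
      unfolding t by (rule mult_right_mono[OF abs_diff]) simp
    also have "\<dots> \<le> max B1 B2" using B1[of \<alpha>] B2[of \<alpha>]
      by (cases "absK (y \<alpha>) \<le> absK (x \<alpha>)") (auto simp: max_def)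
    finally show "t \<le> max B1 B2" .
  qed
qed


lemma zero_D: "(\<lambda>\<alpha>. 0) \<in> dist_alg absK"
  unfolding dist_alg_def by (auto simp: bdd_above_def)

lemma zero_R: "(\<lambda>\<alpha>. 0) \<in> robba p absK"
  using zero_D D_sub_R by blast

lemma R_tl:
  fixes c :: "('n::finite \<Rightarrow> int) \<Rightarrow> 'k"
  assumes "c \<in> robba p absK"
  shows "\<exists>r. r \<in> rpows p \<and> 1 / real p < r \<and> r < 1 \<and> c \<in> halfopen_series p absK r"
  using assms unfolding robba_def by auto

lemma halfopen_tl:
  assumes "c \<in> halfopen_series p absK r" "r \<in> rpows p" "r < 1"
  shows "tl absK c r"
  using assms unfolding halfopen_series_def annulus_tl by auto

lemma bdd_pair:
  fixes x0 v :: "('n::finite\<Rightarrow>int) \<Rightarrow> 'k"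
  assumes "x0 \<in> robba p absK" "v \<in> robba p absK"
  shows "\<exists>B. \<forall>\<alpha>. absK (x0 (\<lambda>i. - \<alpha> i)) * absK (v \<alpha>) \<le> B"
proof -
  obtain r1 where r1: "r1 \<in> rpows p" "1 / real p < r1" "r1 < 1" "x0 \<in> halfopen_series p absK r1"
    using assms(1) unfolding robba_def by auto
  obtain r2 where r2: "r2 \<in> rpows p" "1 / real p < r2" "r2 < 1" "v \<in> halfopen_series p absK r2"
    using assms(2) unfolding robba_def by auto
  define r where "r = max r1 r2"
  have r: "r \<in> rpows p" "1 / real p < r" "r < 1" using r1 r2 by (auto simp: r_def max_def)
  have rpos: "r > 0" using r rpows_pos by auto
  have "x0 \<in> halfopen_series p absK r" "v \<in> halfopen_series p absK r"
    using halfopen_mono[OF r1(4) _ r(1) r(3)] halfopen_mono[OF r2(4) _ r(1) r(3)] by (auto simp: r_def)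
  then have t1: "tl absK x0 r" and t2: "tl absK v r" using halfopen_tl r by auto
  obtain N1 where N1: "\<forall>\<beta>. absdeg \<beta> \<ge> N1 \<longrightarrow> absK (x0 \<beta>) * r powr real_of_int (deg \<beta>) < 1"
    using t1 unfolding tl_def by (meson zero_less_one)
  obtain N2 where N2: "\<forall>\<beta>. absdeg \<beta> \<ge> N2 \<longrightarrow> absK (v \<beta>) * r powr real_of_int (deg \<beta>) < 1"
    using t2 unfolding tl_def by (meson zero_less_one)
  have "\<forall>\<alpha>. absdeg \<alpha> \<ge> max N1 N2 \<longrightarrow> absK (x0 (\<lambda>i. - \<alpha> i)) * absK (v \<alpha>) < 1"
  proof (intro allI impI)
    fix \<alpha> :: "'n \<Rightarrow> int" assume a: "absdeg \<alpha> \<ge> max N1 N2"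
    have h1: "absK (x0 (\<lambda>i. - \<alpha> i)) * r powr real_of_int (- deg \<alpha>) < 1"
      using N1[rule_format, of "\<lambda>i. - \<alpha> i"] a absdeg_neg[of \<alpha>] deg_neg[of \<alpha>] by simp
    have h2: "absK (v \<alpha>) * r powr real_of_int (deg \<alpha>) < 1" using N2 a by auto
    have e: "absK (x0 (\<lambda>i. - \<alpha> i)) * absK (v \<alpha>) = (absK (x0 (\<lambda>i. - \<alpha> i)) * r powr real_of_int (- deg \<alpha>)) * (absK (v \<alpha>) * r powr real_of_int (deg \<alpha>))"
      using rpos by (simp add: powr_minus field_simps)
    have "(absK (x0 (\<lambda>i. - \<alpha> i)) * r powr real_of_int (- deg \<alpha>)) * (absK (v \<alpha>) * r powr real_of_int (deg \<alpha>)) \<le> (absK (x0 (\<lambda>i. - \<alpha> i)) * r powr real_of_int (- deg \<alpha>)) * 1"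
      by (rule mult_left_mono) (use h2 abs_nonneg in auto)
    then show "absK (x0 (\<lambda>i. - \<alpha> i)) * absK (v \<alpha>) < 1" using e h1 by linarith
  qed
  then have "bdd_above (range (\<lambda>\<alpha>. absK (x0 (\<lambda>i. - \<alpha> i)) * absK (v \<alpha>)))" by (rule tail_bdd)
  then show ?thesis unfolding bdd_above_def by auto
qed

lemma L_lattice:
  fixes x0 :: "('n::finite\<Rightarrow>int) \<Rightarrow> 'k"
  assumes x0: "x0 \<in> robba p absK"
  shows "oK_lattice p absK (L_set p absK x0)"
proof -
  have 1: "L_set p absK x0 \<subseteq> robba p absK" by (auto simp: L_set_def)
  have 2: "(\<lambda>\<alpha>. 0) \<in> L_set p absK x0" using zero_R by (auto simp: L_set_def)
  have 3: "(\<lambda>\<alpha>. x \<alpha> + y \<alpha>) \<in> L_set p absK x0" if "x \<in> L_set p absK x0" "y \<in> L_set p absK x0" for x y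
  proof -
    have "absK (x0 (\<lambda>i. - \<alpha> i)) * absK (x \<alpha> + y \<alpha>) \<le> 1" for \<alpha>
    proof -
      have "absK (x0 (\<lambda>i. - \<alpha> i)) * absK (x \<alpha> + y \<alpha>) \<le> absK (x0 (\<lambda>i. - \<alpha> i)) * max (absK (x \<alpha>)) (absK (y \<alpha>))"
        by (rule mult_left_mono[OF abs_ultra abs_nonneg])
      also have "\<dots> \<le> 1" using that unfolding L_set_def
        by (cases "absK (x \<alpha>) \<le> absK (y \<alpha>)") (auto simp: max_def)
      finally show ?thesis .
    qed
    then show ?thesis using that R_add by (auto simp: L_set_def)
  qed
  have 4: "(\<lambda>\<alpha>. a * x \<alpha>) \<in> L_set p absK x0" if "absK a \<le> 1" "x \<in> L_set p absK x0" for a x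
  proof -
    have "absK (x0 (\<lambda>i. - \<alpha> i)) * absK (a * x \<alpha>) \<le> 1" for \<alpha>
    proof -
      have "absK (x0 (\<lambda>i. - \<alpha> i)) * absK (a * x \<alpha>) = absK a * (absK (x0 (\<lambda>i. - \<alpha> i)) * absK (x \<alpha>))"
        by (simp add: abs_mult)
      also have "\<dots> \<le> 1 * 1"
        by (rule mult_mono) (use that abs_nonneg in \<open>auto simp: L_set_def\<close>)
      finally show ?thesis by simp
    qed
    then show ?thesis using that R_smul by (auto simp: L_set_def)
  qed
  have 5: "\<exists>a. a \<noteq> 0 \<and> (\<lambda>\<alpha>. a * v \<alpha>) \<in> L_set p absK x0" if v: "v \<in> robba p absK" for v
  proof -
    obtain B where B: "\<And>\<alpha>. absK (x0 (\<lambda>i. - \<alpha> i)) * absK (v \<alpha>) \<le> B" using bdd_pair[OF x0 v] by blast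
    obtain k where k: "B < real p ^ k" using real_arch_pow[of "real p" B] p_gt1 by auto
    define a :: 'k where "a = of_nat p ^ k"
    have anz: "a \<noteq> 0" using P_nz by (simp add: a_def)
    have aabs: "absK a = inverse (real p ^ k)" using abs_Ppow by (simp add: a_def)
    have ppos: "real p ^ k > 0" using p_gt1 by simp
    have "real p ^ k \<ge> 1" using p_gt1 by (simp add: one_le_power)
    then have ale: "absK a \<le> 1" using aabs by (simp add: inverse_le_1_iff)
    have "absK (x0 (\<lambda>i. - \<alpha> i)) * absK (a * v \<alpha>) \<le> 1" for \<alpha>
    proof -
      have "absK (x0 (\<lambda>i. - \<alpha> i)) * absK (a * v \<alpha>) = inverse (real p ^ k) * (absK (x0 (\<lambda>i. - \<alpha> i)) * absK (v \<alpha>))"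
        by (simp add: abs_mult aabs)
      also have "\<dots> \<le> inverse (real p ^ k) * real p ^ k"
        by (rule mult_left_mono) (use B[of \<alpha>] k in auto)
      also have "\<dots> = 1" using ppos by simp
      finally show ?thesis .
    qed
    then show ?thesis using anz R_smul[OF v ale] by (auto simp: L_set_def)
  qed
  show ?thesis unfolding oK_lattice_def using 1 2 3 4 5 by blast
qed

lemma dirC:
  fixes U :: "(('n::finite\<Rightarrow>int) \<Rightarrow> 'k) set"
  assumes U: "U \<in> nice_open p absK"
  shows "U \<inter> dist_alg absK \<in> frechet_open p absK"
  unfolding frechet_open_def
proof (intro CollectI conjI ballI)
  show "U \<inter> dist_alg absK \<subseteq> dist_alg absK" by auto
  fix x assume x: "x \<in> U \<inter> dist_alg absK"
  from U x obtain M x0 where M: "oK_lattice p absK M" "x0 \<in> robba p absK" "L_set p absK x0 \<subseteq> M"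
     "(\<lambda>m. (\<lambda>\<alpha>. x \<alpha> + m \<alpha>)) ` M \<subseteq> U"
    unfolding nice_open_def by blast
  obtain r where r: "r \<in> rpows p" "1/real p < r" "r<1" "x0 \<in> halfopen_series p absK r"
    using R_tl[OF M(2)] by blast
  have rpos: "r > 0" using r rpows_pos by auto
  have "tl absK x0 r" using halfopen_tl r by auto
  then obtain N where N: "\<forall>\<beta>. absdeg \<beta> \<ge> N \<longrightarrow> absK (x0 \<beta>) * r powr real_of_int (deg \<beta>) < 1"
    unfolding tl_def by (meson zero_less_one)
  have "bdd_above (range (\<lambda>\<beta>. absK (x0 \<beta>) * r powr real_of_int (deg \<beta>)))"
    by (rule tail_bdd) (use N in auto)
  then obtain C0 where C0: "\<And>\<beta>. absK (x0 \<beta>) * r powr real_of_int (deg \<beta>) \<le> C0"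
    unfolding bdd_above_def by auto
  define C where "C = max C0 1"
  have Cpos: "C > 0" by (simp add: C_def)
  have C: "absK (x0 \<beta>) * r powr real_of_int (deg \<beta>) \<le> C" for \<beta> using C0[of \<beta>] by (simp add: C_def)
  have sub: "{y \<in> dist_alg absK. \<forall>\<rho>\<in>{r}. rho_norm absK \<rho> (\<lambda>\<alpha>. y \<alpha> - x \<alpha>) < 1/C} \<subseteq> U \<inter> dist_alg absK"
  proof (rule subsetI)
    fix y assume "y \<in> {y \<in> dist_alg absK. \<forall>\<rho>\<in>{r}. rho_norm absK \<rho> (\<lambda>\<alpha>. y \<alpha> - x \<alpha>) < 1/C}"
    then have y: "y \<in> dist_alg absK" and rn: "rho_norm absK r (\<lambda>\<alpha>. y \<alpha> - x \<alpha>) < 1/C" by auto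
    define d where "d = (\<lambda>\<alpha>. y \<alpha> - x \<alpha>)"
    have dD: "d \<in> dist_alg absK" unfolding d_def using D_diff x y by blast
    then have dR: "d \<in> robba p absK" using D_sub_R by blast
    have bdd: "bdd_above (range (\<lambda>\<alpha>. absK (d \<alpha>) * r powr real_of_int (deg \<alpha>)))"
      using dD rpos r(3) unfolding dist_alg_def by auto
    have "absK (x0 (\<lambda>i. - \<alpha> i)) * absK (d \<alpha>) \<le> 1" for \<alpha>
    proof -
      have b1: "absK (d \<alpha>) * r powr real_of_int (deg \<alpha>) \<le> 1/C"
      proof -
        have "absK (d \<alpha>) * r powr real_of_int (deg \<alpha>) \<le> rho_norm absK r d"
          unfolding rho_norm_def by (rule cSUP_upper[OF _ bdd]) simp
        then show ?thesis using rn unfolding d_def by simp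
      qed
      have b2: "absK (x0 (\<lambda>i. - \<alpha> i)) * r powr real_of_int (- deg \<alpha>) \<le> C"
        using C[of "\<lambda>i. - \<alpha> i"] by (simp add: deg_neg)
      have e: "absK (x0 (\<lambda>i. - \<alpha> i)) * absK (d \<alpha>) = (absK (x0 (\<lambda>i. - \<alpha> i)) * r powr real_of_int (- deg \<alpha>)) * (absK (d \<alpha>) * r powr real_of_int (deg \<alpha>))"
        using rpos by (simp add: powr_minus field_simps)
      also have "\<dots> \<le> C * (1/C)"
        by (rule mult_mono) (use b1 b2 abs_nonneg Cpos in auto)
      also have "\<dots> = 1" using Cpos by simp
      finally show ?thesis .
    qed
    then have "d \<in> L_set p absK x0" using dR by (simp add: L_set_def)
    then have "d \<in> M" using M(3) by blast
    then have "(\<lambda>\<alpha>. x \<alpha> + d \<alpha>) \<in> U" using M(4) by blast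
    moreover have "(\<lambda>\<alpha>. x \<alpha> + d \<alpha>) = y" by (simp add: d_def)
    ultimately show "y \<in> U \<inter> dist_alg absK" using y by simp
  qed
  show "\<exists>F. finite F \<and> F \<subseteq> {1 / real p<..<1} \<and> (\<exists>\<epsilon>>0.
        {y\<in>dist_alg absK. \<forall>\<rho>\<in>F. rho_norm absK \<rho> (\<lambda>\<alpha>. y \<alpha> - x \<alpha>) < \<epsilon>} \<subseteq> U \<inter> dist_alg absK)"
    using sub r Cpos by (intro exI[of _ "{r}"] conjI exI[of _ "1/C"]) auto
qed


lemma absdeg_nn: "absdeg \<beta> \<ge> 0"
  unfolding absdeg_def by (rule sum_nonneg) auto

lemma dirB:
  fixes x :: "('n::finite\<Rightarrow>int) \<Rightarrow> 'k"
  assumes V: "V \<in> frechet_open p absK" and x: "x \<in> V"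
  shows "\<exists>x0\<in>robba p absK. \<forall>y\<in>dist_alg absK. (\<lambda>\<alpha>. y \<alpha> - x \<alpha>) \<in> L_set p absK x0 \<longrightarrow> y \<in> V"
proof -
  from V x obtain F \<epsilon> where F: "finite F" "F \<subseteq> {1/real p<..<1}" "\<epsilon>>0"
    "{y\<in>dist_alg absK. \<forall>\<rho>\<in>F. rho_norm absK \<rho> (\<lambda>\<alpha>. y \<alpha> - x \<alpha>) < \<epsilon>} \<subseteq> V"
    unfolding frechet_open_def by blast
  have xD: "x \<in> dist_alg absK" using V x unfolding frechet_open_def by blast
  show ?thesis
  proof (cases "F = {}")
    case True
    have "\<forall>y\<in>dist_alg absK. (\<lambda>\<alpha>. y \<alpha> - x \<alpha>) \<in> L_set p absK (\<lambda>\<alpha>. 0) \<longrightarrow> y \<in> V"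
      using F(4) True by auto
    then show ?thesis using zero_R by blast
  next
    case False
    define \<rho> where "\<rho> = Max F"
    have \<rho>F: "\<rho> \<in> F" using F False by (simp add: \<rho>_def)
    have \<rho>: "1/real p < \<rho>" "\<rho> < 1" using \<rho>F F(2) by auto
    have \<rho>ge: "\<And>\<rho>'. \<rho>'\<in>F \<Longrightarrow> \<rho>' \<le> \<rho>" using F(1) by (simp add: \<rho>_def)
    have pp: "real p > 1" using p_gt1 by simp
    have ppos: "real p > 0" using pp by simp
    have \<rho>pos: "\<rho> > 0" using \<rho>(1) ppos by (meson less_trans zero_less_divide_1_iff)
    define t where "t = - log (real p) \<rho>"
    have tpos: "t > 0" using \<rho> \<rho>pos pp by (simp add: t_def)
    have \<rho>t: "\<rho> = real p powr (-t)" using \<rho>pos pp by (simp add: t_def)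
    obtain q where q: "q \<in> \<rat>" "-t < q" "q < 0" using Rats_dense_in_real[of "-t" 0] tpos by auto
    define \<sigma> where "\<sigma> = real p powr q"
    have \<sigma>R: "\<sigma> \<in> rpows p" unfolding rpows_def \<sigma>_def using q by auto
    have \<sigma>1: "\<rho> < \<sigma>" unfolding \<rho>t \<sigma>_def using q pp by (intro powr_less_mono) auto
    have "\<sigma> < real p powr 0" unfolding \<sigma>_def using q pp by (intro powr_less_mono) auto
    then have \<sigma>2: "\<sigma> < 1" using pp by simp
    have \<sigma>pos: "\<sigma> > 0" using \<sigma>1 \<rho>pos by simp
    obtain k::nat where k: "(1/real p)^k < \<epsilon>" using real_arch_pow_inv[of \<epsilon> "1/real p"] F(3) pp by auto
    define m where "m = (\<lambda>\<beta>::'n\<Rightarrow>int. nat \<lfloor>t * real_of_int (absdeg \<beta>)\<rfloor>)"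
    define x0 where "x0 = (\<lambda>\<beta>::'n\<Rightarrow>int. if \<forall>i. \<beta> i \<le> 0 then inverse ((of_nat p :: 'k)^k) * (of_nat p :: 'k)^(m \<beta>) else 0)"
    have m1: "real (m \<beta>) \<le> t * real_of_int (absdeg \<beta>)" and m2: "t * real_of_int (absdeg \<beta>) < real (m \<beta>) + 1" for \<beta>
    proof -
      have z: "t * real_of_int (absdeg \<beta>) \<ge> 0" using tpos absdeg_nn[of \<beta>] by simp
      then have "real (m \<beta>) = real_of_int \<lfloor>t * real_of_int (absdeg \<beta>)\<rfloor>" by (simp add: m_def)
      then show "real (m \<beta>) \<le> t * real_of_int (absdeg \<beta>)" "t * real_of_int (absdeg \<beta>) < real (m \<beta>) + 1"
        by linarith+
    qed
    have ax0: "absK (x0 \<beta>) = real p ^ k * real p powr (- real (m \<beta>))" if "\<forall>i. \<beta> i \<le> 0" for \<beta>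
    proof -
      have "absK (x0 \<beta>) = inverse (inverse (real p ^ k)) * inverse (real p ^ m \<beta>)"
        using that by (simp add: x0_def abs_mult abs_inverse abs_Ppow)
      also have "\<dots> = real p ^ k * real p powr (- real (m \<beta>))"
        using ppos by (simp add: powr_minus powr_realpow)
      finally show ?thesis .
    qed
    have tlx0: "tl absK x0 s" if s: "\<sigma> \<le> s" for s
      unfolding tl_def
    proof (intro allI impI)
      fix \<epsilon>'::real assume e': "\<epsilon>'>0"
      define K where "K = real p ^ k * real p"
      have Kpos: "K > 0" using ppos by (simp add: K_def)
      define qq where "qq = \<rho>/\<sigma>"
      have qq: "0 < qq" "qq < 1" using \<rho>pos \<sigma>1 \<sigma>pos by (auto simp: qq_def)
      obtain N::nat where N: "qq^N < \<epsilon>'/K" using real_arch_pow_inv[of "\<epsilon>'/K" qq] e' Kpos qq by auto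
      have spos: "s > 0" using s \<sigma>pos by simp
      show "\<exists>N. \<forall>\<alpha>. absdeg \<alpha> \<ge> N \<longrightarrow> absK (x0 \<alpha>) * s powr real_of_int (deg \<alpha>) < \<epsilon>'"
      proof (intro exI[of _ "int N"] allI impI)
        fix \<beta> :: "'n\<Rightarrow>int" assume bN: "absdeg \<beta> \<ge> int N"
        show "absK (x0 \<beta>) * s powr real_of_int (deg \<beta>) < \<epsilon>'"
        proof (cases "\<forall>i. \<beta> i \<le> 0")
          case False then have "x0 \<beta> = 0" unfolding x0_def by auto
          then show ?thesis using e' by simp
        next
          case True
          define n where "n = real_of_int (absdeg \<beta>)"
          have nN: "real N \<le> n" using bN by (simp add: n_def)
          have n0: "n \<ge> 0" using absdeg_nn[of \<beta>] by (simp add: n_def)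
          have dg: "real_of_int (deg \<beta>) = - n" using deg_nonpos[OF True] by (simp add: n_def)
          have "absK (x0 \<beta>) * s powr real_of_int (deg \<beta>) = real p ^ k * real p powr (- real (m \<beta>)) * s powr (- n)"
            using ax0[OF True] dg by simp
          also have "\<dots> \<le> real p ^ k * (real p * real p powr (-(t*n))) * s powr (- n)"
          proof -
            have "real p powr (- real (m \<beta>)) \<le> real p powr (1 + -(t*n))"
              using m2[of \<beta>] pp by (intro powr_mono) (auto simp: n_def)
            also have "\<dots> = real p * real p powr (-(t*n))" using ppos by (simp only: powr_add powr_one)
            finally show ?thesis using ppos by (intro mult_right_mono mult_left_mono) auto
          qed
          also have "\<dots> = K * (\<rho>/s) powr n"
          proof -
            have "real p powr (-(t*n)) = \<rho> powr n" unfolding \<rho>t by (simp add: powr_powr)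
            then show ?thesis using spos \<rho>pos by (simp add: K_def powr_divide powr_minus field_simps)
          qed
          also have "\<dots> \<le> K * qq powr n"
          proof -
            have "\<rho>/s \<le> qq" unfolding qq_def using s \<sigma>pos \<rho>pos by (intro divide_left_mono) auto
            then have "(\<rho>/s) powr n \<le> qq powr n" using n0 \<rho>pos spos by (intro powr_mono2) auto
            then show ?thesis using Kpos by simp
          qed
          also have "\<dots> \<le> K * qq powr (real N)"
            using nN qq Kpos by (intro mult_left_mono powr_mono') auto
          also have "\<dots> = K * qq^N" using qq by (simp add: powr_realpow)
          also have "\<dots> < \<epsilon>'" using N Kpos by (simp add: pos_less_divide_eq mult.commute)
          finally show ?thesis .
        qed
      qed
    qed
    have "x0 \<in> halfopen_series p absK \<sigma>"
      unfolding halfopen_series_def annulus_tl using tlx0 by auto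
    then have x0R: "x0 \<in> robba p absK" using \<sigma>R \<sigma>1 \<sigma>2 \<rho>(1) unfolding robba_def by auto
    have "\<forall>y\<in>dist_alg absK. (\<lambda>\<alpha>. y \<alpha> - x \<alpha>) \<in> L_set p absK x0 \<longrightarrow> y \<in> V"
    proof (intro ballI impI)
      fix y assume y: "y \<in> dist_alg absK" and yL: "(\<lambda>\<alpha>. y \<alpha> - x \<alpha>) \<in> L_set p absK x0"
      define d where "d = (\<lambda>\<alpha>. y \<alpha> - x \<alpha>)"
      have dD: "d \<in> dist_alg absK" unfolding d_def using D_diff xD y by blast
      have L: "\<And>\<alpha>. absK (x0 (\<lambda>i. - \<alpha> i)) * absK (d \<alpha>) \<le> 1" using yL unfolding L_set_def d_def by auto
      have "rho_norm absK \<rho>' d < \<epsilon>" if \<rho>'F: "\<rho>' \<in> F" for \<rho>'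
      proof -
        have h1: "1/real p < \<rho>'" using \<rho>'F F(2) by auto
        have h2: "0 < 1/real p" using ppos by simp
        have \<rho>': "0<\<rho>'" "\<rho>' \<le> \<rho>" using h1 h2 apply linarith using \<rho>'F \<rho>ge by blast
        have "rho_norm absK \<rho>' d \<le> (1/real p)^k"
          unfolding rho_norm_def
        proof (rule cSUP_least)
          fix \<alpha> :: "'n\<Rightarrow>int"
          show "absK (d \<alpha>) * \<rho>' powr real_of_int (deg \<alpha>) \<le> (1/real p)^k"
          proof (cases "\<exists>i. \<alpha> i < 0")
            case True then have "d \<alpha> = 0" using dD by (auto simp: dist_alg_def)
            then show ?thesis by simp
          next
            case False
            define \<beta> where "\<beta> = (\<lambda>i. - \<alpha> i)"
            have \<beta>: "\<forall>i. \<beta> i \<le> 0" using False unfolding \<beta>_def by (meson neg_le_0_iff_le not_less)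
            define n where "n = real_of_int (absdeg \<alpha>)"
            have "\<forall>i. \<alpha> i \<ge> 0" using False by (meson not_less)
            then have dg: "real_of_int (deg \<alpha>) = n" using deg_nonneg[of \<alpha>] by (simp add: n_def)
            have mb: "real (m \<beta>) \<le> t * n" using m1[of \<beta>] by (simp add: \<beta>_def absdeg_neg n_def)
            have n0: "n \<ge> 0" using absdeg_nn[of \<alpha>] by (simp add: n_def)
            define A where "A = absK (d \<alpha>)"
            have A0: "A \<ge> 0" using abs_nonneg by (simp add: A_def)
            have "real p ^ k * real p powr (- real (m \<beta>)) * A \<le> 1"
              using L[of \<alpha>] ax0[OF \<beta>] by (simp add: A_def \<beta>_def)
            then have "A \<le> real p powr (real (m \<beta>)) / real p ^ k"
              using ppos by (simp add: powr_minus field_simps)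
            also have "\<dots> \<le> real p powr (t * n) / real p ^ k"
              using mb pp ppos by (intro divide_right_mono powr_mono) auto
            finally have A1: "A \<le> real p powr (t * n) / real p ^ k" .
            have "\<rho>' powr n \<le> \<rho> powr n" using \<rho>' n0 by (intro powr_mono2) auto
            also have "\<dots> = real p powr (-(t*n))" unfolding \<rho>t by (simp add: powr_powr)
            finally have R1: "\<rho>' powr n \<le> real p powr (-(t*n))" .
            have "A * \<rho>' powr n \<le> (real p powr (t * n) / real p ^ k) * real p powr (-(t*n))"
              using A1 R1 A0 by (intro mult_mono) auto
            also have "\<dots> = (1/real p)^k" using ppos
              by (simp add: powr_minus field_simps power_one_over)
            finally show ?thesis by (simp add: A_def dg)
          qed
        qed simp
        then show ?thesis using k by linarith
      qed
      then show "y \<in> V" using F(4) y unfolding d_def by auto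
    qed
    then show ?thesis using x0R by blast
  qed
qed

end

theorem lemma5p10:
  fixes p :: nat and absK :: "'k::field \<Rightarrow> real"
  assumes "odd p" and "disc_padic_field p absK"
  shows "{U \<inter> (dist_alg absK :: (('n::finite \<Rightarrow> int) \<Rightarrow> 'k) set) | U. U \<in> nice_open p absK}
           = frechet_open p absK"
proof -
  interpret padic p absK by unfold_locales (rule assms(2))
  have A: "W \<in> frechet_open p absK" if "W \<in> {U \<inter> (dist_alg absK :: (('n::finite \<Rightarrow> int) \<Rightarrow> 'k) set) | U. U \<in> nice_open p absK}" for W
    using that dirC by blast
  have B: "V \<in> {U \<inter> (dist_alg absK :: (('n::finite \<Rightarrow> int) \<Rightarrow> 'k) set) | U. U \<in> nice_open p absK}"
    if V: "V \<in> frechet_open p absK" for V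
  proof -
    have VD: "V \<subseteq> dist_alg absK" using V unfolding frechet_open_def by blast
    define g where "g = (\<lambda>x. SOME x0. x0 \<in> robba p absK \<and> (\<forall>y\<in>dist_alg absK. (\<lambda>\<alpha>. y \<alpha> - x \<alpha>) \<in> L_set p absK x0 \<longrightarrow> y \<in> V))"
    have g: "g x \<in> robba p absK" "\<And>y. y\<in>dist_alg absK \<Longrightarrow> (\<lambda>\<alpha>. y \<alpha> - x \<alpha>) \<in> L_set p absK (g x) \<Longrightarrow> y \<in> V"
      if "x \<in> V" for x
    proof -
      have "\<exists>x0. x0 \<in> robba p absK \<and> (\<forall>y\<in>dist_alg absK. (\<lambda>\<alpha>. y \<alpha> - x \<alpha>) \<in> L_set p absK x0 \<longrightarrow> y \<in> V)"
        using dirB[OF V that] by blast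
      then have "g x \<in> robba p absK \<and> (\<forall>y\<in>dist_alg absK. (\<lambda>\<alpha>. y \<alpha> - x \<alpha>) \<in> L_set p absK (g x) \<longrightarrow> y \<in> V)"
        unfolding g_def by (rule someI_ex)
      then show "g x \<in> robba p absK" "\<And>y. y\<in>dist_alg absK \<Longrightarrow> (\<lambda>\<alpha>. y \<alpha> - x \<alpha>) \<in> L_set p absK (g x) \<Longrightarrow> y \<in> V"
        by auto
    qed
    have lat: "oK_lattice p absK (L_set p absK (g x))" if "x \<in> V" for x
      using L_lattice g(1)[OF that] by blast
    define U where "U = {z. \<exists>x\<in>V. \<exists>m\<in>L_set p absK (g x). z = (\<lambda>\<alpha>. x \<alpha> + m \<alpha>)}"
    have U1: "U \<subseteq> robba p absK"
    proof
      fix z assume "z \<in> U"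
      then obtain x m where xm: "x \<in> V" "m \<in> L_set p absK (g x)" "z = (\<lambda>\<alpha>. x \<alpha> + m \<alpha>)" unfolding U_def by blast
      have "x \<in> robba p absK" using xm VD D_sub_R by blast
      moreover have "m \<in> robba p absK" using xm by (simp add: L_set_def)
      ultimately show "z \<in> robba p absK" using R_add xm by simp
    qed
    have "U \<in> nice_open p absK"
      unfolding nice_open_def
    proof (intro CollectI conjI U1 ballI)
      fix z assume "z \<in> U"
      then obtain x m where xm: "x \<in> V" "m \<in> L_set p absK (g x)" "z = (\<lambda>\<alpha>. x \<alpha> + m \<alpha>)" unfolding U_def by blast
      have "(\<lambda>m'. (\<lambda>\<alpha>. z \<alpha> + m' \<alpha>)) ` L_set p absK (g x) \<subseteq> U"
      proof
        fix w assume "w \<in> (\<lambda>m'. (\<lambda>\<alpha>. z \<alpha> + m' \<alpha>)) ` L_set p absK (g x)"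
        then obtain m' where m': "m' \<in> L_set p absK (g x)" "w = (\<lambda>\<alpha>. z \<alpha> + m' \<alpha>)" by blast
        have "(\<lambda>\<alpha>. m \<alpha> + m' \<alpha>) \<in> L_set p absK (g x)"
          using lat[OF xm(1)] xm(2) m'(1) unfolding oK_lattice_def by blast
        moreover have "w = (\<lambda>\<alpha>. x \<alpha> + (m \<alpha> + m' \<alpha>))" using m'(2) xm(3) by (simp add: add.assoc)
        ultimately show "w \<in> U" unfolding U_def using xm(1)
          by (intro CollectI bexI[of _ x] bexI[of _ "\<lambda>\<alpha>. m \<alpha> + m' \<alpha>"]) auto
      qed
      then show "\<exists>M. oK_lattice p absK M \<and> (\<exists>x0\<in>robba p absK. L_set p absK x0 \<subseteq> M) \<and>
          (\<lambda>m. (\<lambda>\<alpha>. z \<alpha> + m \<alpha>)) ` M \<subseteq> U"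
        using lat[OF xm(1)] g(1)[OF xm(1)] by blast
    qed
    moreover have "U \<inter> dist_alg absK = V"
    proof
      show "U \<inter> dist_alg absK \<subseteq> V"
      proof
        fix z assume z: "z \<in> U \<inter> dist_alg absK"
        then obtain x m where xm: "x \<in> V" "m \<in> L_set p absK (g x)" "z = (\<lambda>\<alpha>. x \<alpha> + m \<alpha>)" unfolding U_def by blast
        have "(\<lambda>\<alpha>. z \<alpha> - x \<alpha>) = m" using xm(3) by simp
        then show "z \<in> V" using g(2)[OF xm(1)] z xm(2) by simp
      qed
      show "V \<subseteq> U \<inter> dist_alg absK"
      proof
        fix x assume x: "x \<in> V"
        have "(\<lambda>\<alpha>. 0) \<in> L_set p absK (g x)" using lat[OF x] unfolding oK_lattice_def by blast
        moreover have "x = (\<lambda>\<alpha>. x \<alpha> + 0)" by simp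
        ultimately have "x \<in> U" unfolding U_def using x
          by (intro CollectI bexI[of _ x] bexI[of _ "\<lambda>\<alpha>. 0"]) auto
        then show "x \<in> U \<inter> dist_alg absK" using x VD by blast
      qed
    qed
    ultimately show ?thesis by blast
  qed
  show ?thesis using A B by blast
qed

end
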